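(* Let $\gamma>0$ and let $u:(0,\infty)\to(0,\infty)$ be a stable function bounded from above by some $u^\infty>0$. For every $X=(x_1,\ldots,x_n)\in\mathbb R^{p\times n}$ with nonzero columns, there exists a unique $\hat\Delta\in\mathcal D_n^+$ such that $\hat\Delta=I^X(u(\hat\Delta))$, i.e. $\hat\Delta_i=\frac1nx_i^T\big(\frac1nXu(\hat\Delta)X^T+\gamma I_p\big)^{-1}x_i$ for all $i\in[n]$.
   Context: $u$ stable means $|u(x)-u(y)|\le\sqrt{\frac{u(x)u(y)}{xy}}|x-y|$ for all $x,y>0$ (equivalently $t\mapsto tu(t)$ non-decreasing and $t\mapsto u(t)/t$ non-increasing). $\mathcal D_n^+$ is the set of $n\times n$ diagonal matrices with positive diagonal entries, and $u(\Delta)$ is $u$ applied entrywise to the diagonal. $I^X(\Delta)=\mathrm{diag}\big(\frac1nx_i^T(\frac1nX\Delta X^T+\gamma I_p)^{-1}x_i\big)_i$. *)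

theory Defs
  imports "HOL-Analysis.Analysis"
begin

definition stable :: "(real \<Rightarrow> real) \<Rightarrow> bool" where
  "stable u \<longleftrightarrow> (\<forall>x>0. \<forall>y>0. \<bar>u x - u y\<bar> \<le> sqrt (u x * u y / (x * y)) * \<bar>x - y\<bar>)"

definition diag_mat :: "real ^ 'n \<Rightarrow> real ^ 'n ^ 'n" where
  "diag_mat d = (\<chi> i j. if i = j then d $ i else 0)"

definition vec_apply :: "(real \<Rightarrow> real) \<Rightarrow> real ^ 'n \<Rightarrow> real ^ 'n" where
  "vec_apply u d = (\<chi> i. u (d $ i))"

text \<open>I^X(Delta) for X a p x n matrix (columns x_i), Delta given by its diagonal d.\<close>
definition IX :: "real \<Rightarrow> real ^ 'n ^ 'p \<Rightarrow> real ^ 'n \<Rightarrow> real ^ 'n" where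
  "IX \<gamma> X d = (let n = real CARD('n);
     M = (1 / n) *\<^sub>R (X ** diag_mat d ** transpose X) + \<gamma> *\<^sub>R mat 1
   in (\<chi> i. (1 / n) * (column i X \<bullet> (matrix_inv M *v column i X))))"

end

theory Submission
  imports Defs
begin

lemma t_ineq:
  fixes r l :: real assumes "l > 0" "r > 0" "r \<le> l" "1/l \<le> r"
  shows "r + 1/r \<le> l + 1/l"
proof -
  have "l + 1/l - (r + 1/r) = (l - r) * (l * r - 1) / (l * r)" using assms by (simp add: field_simps)
  moreover have "l * r - 1 \<ge> 0" using assms by (simp add: field_simps)
  ultimately show ?thesis using assms by (smt (verit) divide_nonneg_pos mult_nonneg_nonneg mult_pos_pos)
qed

lemma t_strict:
  fixes r l :: real assumes "l \<ge> 1" "r > l"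
  shows "r + 1/r > l + 1/l"
proof -
  have "r + 1/r - (l + 1/l) = (r - l) * (l * r - 1) / (l * r)" using assms by (simp add: field_simps)
  moreover have "l * r - 1 > 0" using assms by (smt (verit) mult_less_cancel_left1)
  ultimately show ?thesis using assms by (smt (verit) divide_pos_pos mult_pos_pos)
qed

lemma stable_ratio:
  assumes st: "stable u" and pos: "\<forall>x>0. u x > 0" and x: "x > 0" and y: "y > 0"
    and l1: "x / y \<le> l" and l2: "y / x \<le> l"
  shows "u x \<le> l * u y"
proof (rule ccontr)
  assume "\<not> u x \<le> l * u y"
  then have c: "u x > l * u y" by simp
  define a where "a = u x" define b where "b = u y"
  have a: "a > 0" and b: "b > 0" using pos x y unfolding a_def b_def by auto
  have lpos: "l > 0" using l1 x y by (smt (verit) divide_pos_pos)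
  have "\<bar>a - b\<bar> \<le> sqrt (a * b / (x * y)) * \<bar>x - y\<bar>" using st x y unfolding stable_def a_def b_def by blast
  then have "\<bar>a - b\<bar>^2 \<le> (sqrt (a * b / (x * y)) * \<bar>x - y\<bar>)^2" by (intro power_mono) auto
  also have "\<dots> = a * b / (x * y) * (x - y)^2" using a b x y by (simp add: power_mult_distrib)
  finally have sq: "(a - b)^2 \<le> a * b / (x * y) * (x - y)^2" by simp
  have e1: "(a - b)^2 / (a * b) = a / b + 1 / (a / b) - 2" using a b by (simp add: field_simps power2_eq_square)
  have e2: "(x - y)^2 / (x * y) = x / y + 1 / (x / y) - 2" using x y by (simp add: field_simps power2_eq_square)
  have "(a - b)^2 / (a * b) \<le> (x - y)^2 / (x * y)" using sq a b x y by (simp add: field_simps)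
  then have h: "a / b + 1 / (a / b) \<le> x / y + 1 / (x / y)" using e1 e2 by simp
  have "1 / l \<le> x / y" using l2 lpos x y by (simp add: field_simps)
  then have h2: "x / y + 1 / (x / y) \<le> l + 1 / l" using t_ineq[of l "x/y"] lpos x y l1 by simp
  have l1': "l \<ge> 1"
  proof (rule ccontr)
    assume "\<not> l \<ge> 1"
    then have "l < 1" by simp
    have "l * y < 1 * y" "l * x < 1 * x" using \<open>l < 1\<close> x y by (intro mult_strict_right_mono; simp)+
    moreover have "x \<le> l * y" "y \<le> l * x" using l1 l2 x y by (simp_all add: field_simps)
    ultimately show False by simp
  qed
  have "a / b > l" using c b unfolding a_def[symmetric] b_def[symmetric] by (simp add: field_simps)
  then have "a / b + 1 / (a / b) > l + 1 / l" using t_strict[OF l1'] by blast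
  then show False using h h2 by simp
qed

definition Mm :: "real \<Rightarrow> real ^ 'n ^ 'p \<Rightarrow> real ^ 'n \<Rightarrow> real ^ 'p ^ 'p" where
  "Mm g X D = (1 / real CARD('n)) *\<^sub>R (X ** diag_mat D ** transpose X) + g *\<^sub>R mat 1"

definition Qf :: "real ^ 'n ^ 'p \<Rightarrow> real ^ 'n \<Rightarrow> real ^ 'p \<Rightarrow> real ^ 'p \<Rightarrow> real" where
  "Qf X D v y = (\<Sum>i\<in>UNIV. D$i * (column i X \<bullet> v) * (column i X \<bullet> y))"

context fixes X :: "real ^ 'n ^ 'p" begin

lemma IX_alt: "IX g X D = (\<chi> i. (1 / real CARD('n)) * (column i X \<bullet> (matrix_inv (Mm g X D) *v column i X)))"
  unfolding IX_def Mm_def Let_def by simp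

lemma Mv_formula:
  shows "Mm g X D *v y
     = (1/real CARD('n)) *\<^sub>R (\<Sum>i\<in>UNIV. (D$i * (column i X \<bullet> y)) *\<^sub>R column i X) + g *\<^sub>R y"
proof -
  have "(X ** diag_mat D ** transpose X) *v y = (\<Sum>i\<in>UNIV. (D$i * (column i X \<bullet> y)) *\<^sub>R column i X)"
    unfolding vec_eq_iff
    apply (simp add: matrix_vector_mult_def matrix_matrix_mult_def diag_mat_def transpose_def column_def
       inner_vec_def sum_distrib_left sum_distrib_right if_distrib cong: if_cong)
    apply (subst sum.swap) apply (simp add: mult_ac sum_distrib_left)
    done
  then show ?thesis unfolding Mm_def
    by (simp add: matrix_vector_mult_add_rdistrib scaleR_matrix_vector_assoc[symmetric] algebra_simps)
qed

lemma bilin: "v \<bullet> (Mm g X D *v y) = Qf X D v y / real CARD('n) + g * (v \<bullet> y)"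
  unfolding Mv_formula Qf_def
  by (simp add: inner_add_right inner_sum_right sum_divide_distrib mult_ac inner_commute)

lemma Qf_sym: "Qf X D v y = Qf X D y v"
  unfolding Qf_def by (simp add: mult_ac)

lemma Qf_nonneg: "\<forall>i. D$i \<ge> 0 \<Longrightarrow> Qf X D y y \<ge> 0"
  unfolding Qf_def by (intro sum_nonneg) (simp add: mult.assoc)

lemma Qf_scale: "Qf X D (a *\<^sub>R y) (a *\<^sub>R y) = a^2 * Qf X D y y"
  unfolding Qf_def by (simp add: sum_distrib_left power2_eq_square mult_ac)

lemma Qf_mono: "\<forall>i. E$i \<le> l * D$i \<Longrightarrow> Qf X E y y \<le> l * Qf X D y y"
  unfolding Qf_def sum_distrib_left
  apply (intro sum_mono)
  subgoal for i
    using mult_right_mono[of "E$i" "l * D$i" "(column i X \<bullet> y) * (column i X \<bullet> y)"]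
    by (simp add: mult_ac)
  done

lemma quad_ge:
  assumes "\<forall>i. D$i \<ge> 0"
  shows "y \<bullet> (Mm g X D *v y) \<ge> g * (y \<bullet> y)"
  using Qf_nonneg[OF assms, of y] unfolding bilin by simp

lemma Mm_invertible:
  assumes "g > 0" "\<forall>i. D$i \<ge> 0"
  shows "invertible (Mm g X D)"
proof -
  have "\<forall>x. Mm g X D *v x = 0 \<longrightarrow> x = 0"
  proof (intro allI impI)
    fix x assume "Mm g X D *v x = 0"
    then have "g * (x \<bullet> x) \<le> 0" using quad_ge[OF assms(2), of g x] by simp
    then have "x \<bullet> x \<le> 0" using assms(1) by (simp add: mult_le_0_iff)
    then show "x = 0" using inner_ge_zero[of x] by (metis inner_eq_zero_iff order_antisym)
  qed
  then show ?thesis unfolding invertible_left_inverse matrix_left_invertible_ker .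
qed

lemma Mm_solve:
  assumes "g > 0" "\<forall>i. D$i \<ge> 0"
  shows "Mm g X D *v (matrix_inv (Mm g X D) *v x) = x"
proof -
  have "Mm g X D ** matrix_inv (Mm g X D) = mat 1"
    using Mm_invertible[OF assms] unfolding invertible_def matrix_inv_def
    by (rule someI_ex[where P="\<lambda>A'. Mm g X D ** A' = mat 1 \<and> A' ** Mm g X D = mat 1", THEN conjunct1])
  then show ?thesis by (simp add: matrix_vector_mul_assoc)
qed

lemma variational:
  assumes "g > 0" "\<forall>i. D$i \<ge> 0"
  shows "2 * (x \<bullet> y) - y \<bullet> (Mm g X D *v y) \<le> x \<bullet> (matrix_inv (Mm g X D) *v x)"
proof -
  define w where "w = matrix_inv (Mm g X D) *v x"
  have Mw: "Mm g X D *v w = x" unfolding w_def by (rule Mm_solve[OF assms])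
  have "0 \<le> (y - w) \<bullet> (Mm g X D *v (y - w))"
    using quad_ge[OF assms(2), of g "y - w"] assms(1) by (smt (verit) inner_ge_zero mult_nonneg_nonneg)
  also have "\<dots> = y \<bullet> (Mm g X D *v y) - y \<bullet> (Mm g X D *v w) - w \<bullet> (Mm g X D *v y) + w \<bullet> (Mm g X D *v w)"
    by (simp add: matrix_vector_mult_diff_distrib inner_diff_left inner_diff_right)
  also have "w \<bullet> (Mm g X D *v y) = y \<bullet> (Mm g X D *v w)"
    unfolding bilin by (simp add: Qf_sym inner_commute)
  finally show ?thesis unfolding Mw w_def[symmetric] by (simp add: inner_commute)
qed

lemma core_ineq:
  assumes g: "g > 0" and D: "\<forall>i. D$i \<ge> 0" and E: "\<forall>i. E$i \<ge> 0" and l: "l \<ge> 1"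
    and ED: "\<forall>i. E$i \<le> l * D$i" and x: "x \<noteq> 0"
  shows "x \<bullet> (matrix_inv (Mm g X D) *v x) + g * (1 - 1/l) * ((matrix_inv (Mm g X D) *v x) \<bullet> (matrix_inv (Mm g X D) *v x))
          \<le> l * (x \<bullet> (matrix_inv (Mm g X E) *v x))"
    and "(matrix_inv (Mm g X D) *v x) \<bullet> (matrix_inv (Mm g X D) *v x) > 0"
proof -
  define z where "z = matrix_inv (Mm g X D) *v x"
  define c where "c = real CARD('n)"
  have c: "c > 0" unfolding c_def by simp
  have Mz: "Mm g X D *v z = x" unfolding z_def by (rule Mm_solve[OF g D])
  have hz: "x \<bullet> z = Qf X D z z / c + g * (z \<bullet> z)"
    using bilin[of z g D z] unfolding Mz c_def by (simp add: inner_commute)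
  show zpos: "(matrix_inv (Mm g X D) *v x) \<bullet> (matrix_inv (Mm g X D) *v x) > 0"
  proof -
    have "z \<noteq> 0" using Mz x by auto
    then show ?thesis unfolding z_def[symmetric] by simp
  qed
  define y where "y = (1/l) *\<^sub>R z"
  have var: "2 * (x \<bullet> y) - y \<bullet> (Mm g X E *v y) \<le> x \<bullet> (matrix_inv (Mm g X E) *v x)"
    by (rule variational[OF g E])
  have "y \<bullet> (Mm g X E *v y) = (1/l)^2 * Qf X E z z / c + g * (1/l)^2 * (z \<bullet> z)"
    unfolding bilin y_def Qf_scale c_def by (simp add: power2_eq_square)
  also have "\<dots> \<le> (1/l)^2 * (l * Qf X D z z) / c + g * (1/l)^2 * (z \<bullet> z)"
    using Qf_mono[OF ED, of z] c by (intro add_right_mono divide_right_mono mult_left_mono) auto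
  also have "\<dots> = (1/l) * (Qf X D z z / c) + g * (1/l)^2 * (z \<bullet> z)"
    using l by (simp add: power2_eq_square field_simps)
  finally have h1: "y \<bullet> (Mm g X E *v y) \<le> (1/l) * (Qf X D z z / c) + g * (1/l)^2 * (z \<bullet> z)" .
  have h2: "x \<bullet> y = (1/l) * (x \<bullet> z)" unfolding y_def by simp
  have "(1/l) * (x \<bullet> z) + g * (1/l) * (z \<bullet> z) - g * (1/l)^2 * (z \<bullet> z) \<le> x \<bullet> (matrix_inv (Mm g X E) *v x)"
    using var h1 h2 hz by (simp add: algebra_simps)
  then have "l * ((1/l) * (x \<bullet> z) + g * (1/l) * (z \<bullet> z) - g * (1/l)^2 * (z \<bullet> z)) \<le> l * (x \<bullet> (matrix_inv (Mm g X E) *v x))"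
    using l by (simp add: mult_left_mono)
  moreover have "l * ((1/l) * (x \<bullet> z) + g * (1/l) * (z \<bullet> z) - g * (1/l)^2 * (z \<bullet> z)) = x \<bullet> z + g * (1 - 1/l) * (z \<bullet> z)"
    using l by (simp add: power2_eq_square field_simps)
  ultimately show "x \<bullet> (matrix_inv (Mm g X D) *v x) + g * (1 - 1/l) * ((matrix_inv (Mm g X D) *v x) \<bullet> (matrix_inv (Mm g X D) *v x))
          \<le> l * (x \<bullet> (matrix_inv (Mm g X E) *v x))" unfolding z_def by simp
qed

lemma core:
  assumes g: "g > 0" and D: "\<forall>i. D$i \<ge> 0" and E: "\<forall>i. E$i \<ge> 0" and l: "l \<ge> 1"
    and ED: "\<forall>i. E$i \<le> l * D$i" and x: "column k X \<noteq> 0"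
  shows "IX g X D $ k \<le> l * IX g X E $ k" and "l > 1 \<Longrightarrow> IX g X D $ k < l * IX g X E $ k"
proof -
  note c1 = core_ineq[OF g D E l ED x]
  define a where "a = column k X \<bullet> (matrix_inv (Mm g X D) *v column k X)"
  define b where "b = column k X \<bullet> (matrix_inv (Mm g X E) *v column k X)"
  define q where "q = (matrix_inv (Mm g X D) *v column k X) \<bullet> (matrix_inv (Mm g X D) *v column k X)"
  have ab: "a + g * (1 - 1/l) * q \<le> l * b" and q: "q > 0" using c1 unfolding a_def b_def q_def by auto
  have n: "1 / real CARD('n) > 0" by simp
  have IXD: "IX g X D $ k = (1 / real CARD('n)) * a" and IXE: "IX g X E $ k = (1 / real CARD('n)) * b"
    unfolding IX_alt a_def b_def by simp_all
  have "0 \<le> g * (1 - 1/l) * q" using g l q by (simp add: field_simps)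
  then have "a \<le> l * b" using ab by linarith
  then show "IX g X D $ k \<le> l * IX g X E $ k" unfolding IXD IXE using n
    by (metis mult.left_commute mult_left_mono less_imp_le)
  assume l1: "l > 1"
  have "0 < g * (1 - 1/l) * q" using g l1 q by (simp add: field_simps)
  then have "a < l * b" using ab by linarith
  then show "IX g X D $ k < l * IX g X E $ k" unfolding IXD IXE using n
    by (metis mult.left_commute mult_strict_left_mono)
qed

lemma IX_pos:
  assumes g: "g > 0" and D: "\<forall>i. D$i \<ge> 0" and x: "column k X \<noteq> 0"
  shows "IX g X D $ k > 0"
proof -
  define z where "z = matrix_inv (Mm g X D) *v column k X"
  have Mz: "Mm g X D *v z = column k X" unfolding z_def by (rule Mm_solve[OF g D])
  have "z \<noteq> 0" using Mz x by auto
  then have "z \<bullet> z > 0" by simp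
  moreover have "column k X \<bullet> z \<ge> g * (z \<bullet> z)" using quad_ge[OF D, of g z] unfolding Mz by (simp add: inner_commute)
  ultimately have "column k X \<bullet> z > 0" using g by (smt (verit) mult_pos_pos)
  then show ?thesis unfolding IX_alt z_def by simp
qed

end

lemma contraction:
  fixes X :: "real ^ 'n ^ 'p"
  assumes g: "g > 0" and st: "stable u" and pos: "\<forall>x>0. u x > 0" and cols: "\<forall>i. column i X \<noteq> 0"
    and d: "\<forall>i. d$i > 0" and e: "\<forall>i. e$i > 0" and l: "l \<ge> 1"
    and de: "\<forall>i. d$i \<le> l * e$i \<and> e$i \<le> l * d$i"
  shows "IX g X (vec_apply u d) $ k \<le> l * IX g X (vec_apply u e) $ k"
    and "l > 1 \<Longrightarrow> IX g X (vec_apply u d) $ k < l * IX g X (vec_apply u e) $ k"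
proof -
  have D: "\<forall>i. (vec_apply u d)$i \<ge> 0" using d pos unfolding vec_apply_def by (simp add: less_imp_le)
  have E: "\<forall>i. (vec_apply u e)$i \<ge> 0" using e pos unfolding vec_apply_def by (simp add: less_imp_le)
  have ED: "\<forall>i. (vec_apply u e)$i \<le> l * (vec_apply u d)$i"
  proof
    fix i
    have "e$i / d$i \<le> l" "d$i / e$i \<le> l" using de d e by (simp_all add: field_simps)
    then show "(vec_apply u e)$i \<le> l * (vec_apply u d)$i"
      unfolding vec_apply_def using stable_ratio[OF st pos, of "e$i" "d$i" l] d e by simp
  qed
  show "IX g X (vec_apply u d) $ k \<le> l * IX g X (vec_apply u e) $ k"
    by (rule core(1)[OF g D E l ED cols[rule_format]])
  show "l > 1 \<Longrightarrow> IX g X (vec_apply u d) $ k < l * IX g X (vec_apply u e) $ k"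
    by (rule core(2)[OF g D E l ED cols[rule_format]])
qed

theorem proposition3:
  fixes \<gamma> :: real and u :: "real \<Rightarrow> real" and X :: "real ^ 'n ^ 'p"
  assumes "\<gamma> > 0"
    and "\<forall>x>0. u x > 0"
    and "stable u"
    and "\<exists>u_inf>0. \<forall>x>0. u x \<le> u_inf"
    and "\<forall>i. column i X \<noteq> 0"
  shows "\<exists>!d :: real ^ 'n. (\<forall>i. d $ i > 0) \<and> d = IX \<gamma> X (vec_apply u d)"
proof -
  note g = assms(1) and pos = assms(2) and st = assms(3) and cols = assms(5)
  obtain ui where ui: "ui > 0" "\<forall>x>0. u x \<le> ui" using assms(4) by blast
  define U where "U = max ui 1"
  have U1: "U \<ge> 1" unfolding U_def by simp
  define f where "f d = IX \<gamma> X (vec_apply u d)" for d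
  note contr = contraction[OF g st pos cols]
  define one :: "real ^ 'n" where "one = (\<chi> i. 1)"
  define a :: "real ^ 'n" where "a = (\<chi> k. IX \<gamma> X one $ k / U)"
  define b :: "real ^ 'n" where "b = IX \<gamma> X 0"
  have apos: "a$k > 0" for k
    unfolding a_def using IX_pos[OF g _ cols[rule_format], of one k] U1 by (simp add: one_def)
  have bpos: "b$k > 0" for k
    unfolding b_def using IX_pos[OF g _ cols[rule_format], of 0 k] by simp
  have bounds: "a$k \<le> f d $k \<and> f d $k \<le> b$k" if d: "\<forall>i. d$i > 0" for d k
  proof
    have D: "\<forall>i. (vec_apply u d)$i \<ge> 0" using d pos unfolding vec_apply_def by (simp add: less_imp_le)
    have "IX \<gamma> X one $ k \<le> U * IX \<gamma> X (vec_apply u d) $ k"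
    proof (rule core(1)[OF g _ D U1 _ cols[rule_format]])
      show "\<forall>i. 0 \<le> one $ i" unfolding one_def by simp
      show "\<forall>i. vec_apply u d $ i \<le> U * one $ i"
        unfolding one_def vec_apply_def U_def using ui(2) d by (simp add: le_max_iff_disj)
    qed
    then show "a$k \<le> f d $k" unfolding a_def f_def using U1 by (simp add: field_simps)
    have "IX \<gamma> X (vec_apply u d) $ k \<le> 1 * IX \<gamma> X 0 $ k"
      by (rule core(1)[OF g D _ _ _ cols[rule_format]]) (use D in auto)
    then show "f d $k \<le> b$k" unfolding b_def f_def by simp
  qed
  define S where "S = cbox a b"
  have inS: "f d \<in> S" if "\<forall>i. d$i > 0" for d
    using bounds[OF that] unfolding S_def mem_box_cart by blast
  have Spos: "\<forall>i. d$i > 0" if "d \<in> S" for d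
    using that apos unfolding S_def mem_box_cart by (meson less_le_trans)
  have existence: "\<exists>d. (\<forall>i. d $ i > 0) \<and> d = f d"
  proof -
    have "S \<noteq> {}" using inS[of b] bpos by auto
    moreover have "compact S" "convex S" unfolding S_def by auto
    moreover have "f \<in> S \<rightarrow> S" using inS Spos by auto
    moreover have "continuous_on S f"
    proof -
      define cm where "cm = Min (range (\<lambda>i. a$i))"
      have cm: "cm > 0" unfolding cm_def using apos by simp
      have cma: "cm \<le> a$i" for i unfolding cm_def by simp
      define B where "B = (\<Sum>i\<in>UNIV. b$i)"
      have bB: "b$i \<le> B" for i unfolding B_def
        using member_le_sum[of i UNIV "\<lambda>i. b$i"] bpos by (simp add: less_imp_le)
      define K where "K = real CARD('n) * B / cm"
      have K0: "K \<ge> 0" unfolding K_def using cm bB[of undefined] bpos[of undefined] by simp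
      have lip: "dist (f d) (f e) \<le> K * dist d e" if d: "d \<in> S" and e: "e \<in> S" for d e
      proof -
        define l where "l = 1 + norm (d - e) / cm"
        have l: "l \<ge> 1" unfolding l_def using cm by simp
        have lm: "(l - 1) * cm = norm (d - e)" unfolding l_def using cm by simp
        have dp: "\<forall>i. d$i > 0" and ep: "\<forall>i. e$i > 0" using Spos d e by auto
        have dge: "d$i \<ge> cm" "e$i \<ge> cm" for i
          using d e cma[of i] unfolding S_def mem_box_cart by (meson order_trans)+
        have de: "\<forall>i. d$i \<le> l * e$i \<and> e$i \<le> l * d$i"
        proof
          fix i
          have n1: "\<bar>(d - e)$i\<bar> \<le> norm (d - e)" by (rule component_le_norm_cart)
          have "(l - 1) * cm \<le> (l - 1) * e$i" "(l - 1) * cm \<le> (l - 1) * d$i"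
            using dge[of i] l by (simp_all add: mult_left_mono)
          then show "d$i \<le> l * e$i \<and> e$i \<le> l * d$i" using n1 lm by (auto simp: algebra_simps abs_le_iff)
        qed
        have de': "\<forall>i. e$i \<le> l * d$i \<and> d$i \<le> l * e$i" using de by auto
        have comp: "\<bar>f d $k - f e $k\<bar> \<le> (l - 1) * B" for k
        proof -
          have h1: "f d $k \<le> l * f e $k" unfolding f_def by (rule contr(1)[OF dp ep l de])
          have h2: "f e $k \<le> l * f d $k" unfolding f_def by (rule contr(1)[OF ep dp l de'])
          have b1: "f d $k \<le> b$k" "f e $k \<le> b$k" using bounds dp ep by auto
          have p1: "f d $k \<ge> 0" "f e $k \<ge> 0" using bounds[OF dp, of k] bounds[OF ep, of k] apos[of k] by auto
          have "(l - 1) * f e $k \<le> (l - 1) * B" "(l - 1) * f d $k \<le> (l - 1) * B"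
            using b1 bB[of k] l by (simp_all add: mult_left_mono)
          then show ?thesis using h1 h2 by (auto simp: algebra_simps abs_le_iff)
        qed
        have "dist (f d) (f e) = norm (f d - f e)" by (simp add: dist_norm)
        also have "\<dots> \<le> (\<Sum>k\<in>UNIV. \<bar>(f d - f e)$k\<bar>)" by (rule norm_le_l1_cart)
        also have "\<dots> \<le> (\<Sum>k\<in>(UNIV::'n set). (l - 1) * B)" using comp by (metis (no_types, lifting) sum_mono vector_minus_component)
        also have "\<dots> = real CARD('n) * ((l - 1) * B)" by simp
        also have "\<dots> = K * dist d e" unfolding K_def l_def using cm by (simp add: dist_norm field_simps)
        finally show ?thesis .
      qed
      have "K-lipschitz_on S f" by (rule lipschitz_onI[OF lip K0])
      then show ?thesis by (rule lipschitz_on_continuous_on)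
    qed
    ultimately obtain d where "d \<in> S" "f d = d" using brouwer by blast
    then show ?thesis using Spos by metis
  qed
  show ?thesis
  proof (rule ex_ex1I)
    show "\<exists>d. (\<forall>i. 0 < d $ i) \<and> d = IX \<gamma> X (vec_apply u d)" using existence unfolding f_def .
  next
    fix d e
    assume "(\<forall>i. 0 < d $ i) \<and> d = IX \<gamma> X (vec_apply u d)" "(\<forall>i. 0 < e $ i) \<and> e = IX \<gamma> X (vec_apply u e)"
    then have dp: "\<forall>i. d$i > 0" and ep: "\<forall>i. e$i > 0" and fd: "f d = d" and fe: "f e = e"
      unfolding f_def by auto
    define l where "l = Max (range (\<lambda>i. max (d$i / e$i) (e$i / d$i)))"
    have lge: "max (d$i / e$i) (e$i / d$i) \<le> l" for i unfolding l_def by (rule Max_ge) auto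
    have de: "\<forall>i. d$i \<le> l * e$i \<and> e$i \<le> l * d$i"
    proof
      fix i
      have "d$i / e$i \<le> l" "e$i / d$i \<le> l" using lge[of i] by auto
      then show "d$i \<le> l * e$i \<and> e$i \<le> l * d$i" using dp ep by (simp add: field_simps)
    qed
    show "d = e"
    proof (cases "l \<le> 1")
      case True
      have "d$i = e$i" for i
      proof -
        have "l * e$i \<le> e$i" "l * d$i \<le> d$i" using True dp ep
          by (metis less_imp_le mult_right_mono mult_1)+
        then show ?thesis using de by (meson order_antisym order_trans)
      qed
      then show ?thesis by (simp add: vec_eq_iff)
    next
      case False
      then have l1: "l > 1" "l \<ge> 1" by auto
      have de': "\<forall>i. e$i \<le> l * d$i \<and> d$i \<le> l * e$i" using de by auto
      have "max (d$i / e$i) (e$i / d$i) < l" for i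
      proof -
        have "d$i < l * e$i" using contr(2)[OF dp ep l1(2) de l1(1), of i] fd fe unfolding f_def by simp
        moreover have "e$i < l * d$i" using contr(2)[OF ep dp l1(2) de' l1(1), of i] fd fe unfolding f_def by simp
        ultimately show ?thesis using dp ep by (simp add: field_simps)
      qed
      then have "Max (range (\<lambda>i. max (d$i / e$i) (e$i / d$i))) < l" by (simp add: Max_less_iff)
      then show ?thesis unfolding l_def by simp
    qed
  qed
qed

end
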